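(* Let $k$ be a field, $A$ a $k$-algebra, $a_1,\ldots,a_m\in A$, $d\ge1$, and $M_{d,m}=\binom{d+m-1}{m}$. If $P_{\le M_{d,m}}(a_1,\ldots,a_m)\subseteq P_{\le d-1}(a_1,\ldots,a_m)$, then every element of the subspace $ka_1+\cdots+ka_m$ is algebraic over $k$ of degree at most $M_{d,m}$.
   Context: Algebras are associative with unit. For nonnegative integers $i_1,\ldots,i_m$, $p_{i_1,\ldots,i_m}(x_1,\ldots,x_m)$ is the sum of all distinct noncommutative monomials with exactly $i_j$ occurrences of $x_j$ for each $j$ ($p_{0,\ldots,0}=1$); $p_{i_1,\ldots,i_m}(a_1,\ldots,a_m)$ is its evaluation at $x_j=a_j$. $P_n(a_1,\ldots,a_m)=\operatorname{span}_k\{p_{i_1,\ldots,i_m}(a_1,\ldots,a_m)\mid i_1+\cdots+i_m=n\}$ and $P_{\le r}(a_1,\ldots,a_m)=\sum_{n=0}^rP_n(a_1,\ldots,a_m)$. Algebraic of degree at most $D$ means a root of a nonzero polynomial in $k[t]$ of degree at most $D$. *)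

theory Defs
  imports Main "HOL-Computational_Algebra.Polynomial"
begin

definition k_algebra :: "('a::field \<Rightarrow> 'b::ring_1 \<Rightarrow> 'b) \<Rightarrow> bool" where
  "k_algebra s \<longleftrightarrow> vector_space s \<and>
     (\<forall>c x y. s c (x * y) = s c x * y \<and> s c (x * y) = x * s c y)"

text \<open>Noncommutative monomials in x_0,...,x_(m-1) with exactly i j occurrences of x_j
  are the words w over {0..<m} with count_list w j = i j; their evaluation at x_j = a j
  is the product along the word.\<close>
definition monomials :: "nat \<Rightarrow> (nat \<Rightarrow> nat) \<Rightarrow> nat list set" where
  "monomials m i = {w. set w \<subseteq> {..<m} \<and> (\<forall>j<m. count_list w j = i j)}"

definition pev :: "nat \<Rightarrow> (nat \<Rightarrow> 'b::ring_1) \<Rightarrow> (nat \<Rightarrow> nat) \<Rightarrow> 'b" where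
  "pev m a i = (\<Sum>w\<in>monomials m i. prod_list (map a w))"

definition Pn :: "('a::field \<Rightarrow> 'b::ring_1 \<Rightarrow> 'b) \<Rightarrow> nat \<Rightarrow> (nat \<Rightarrow> 'b) \<Rightarrow> nat \<Rightarrow> 'b set" where
  "Pn s m a n = module.span s {pev m a i | i. (\<Sum>j<m. i j) = n}"

definition Ple :: "('a::field \<Rightarrow> 'b::ring_1 \<Rightarrow> 'b) \<Rightarrow> nat \<Rightarrow> (nat \<Rightarrow> 'b) \<Rightarrow> nat \<Rightarrow> 'b set" where
  "Ple s m a r = module.span s (\<Union>n\<in>{0..r}. Pn s m a n)"

definition alg_eval :: "('a::field \<Rightarrow> 'b::ring_1 \<Rightarrow> 'b) \<Rightarrow> 'a poly \<Rightarrow> 'b \<Rightarrow> 'b" where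
  "alg_eval s q x = (\<Sum>t\<le>degree q. s (coeff q t) (x ^ t))"

definition algebraic_deg_le :: "('a::field \<Rightarrow> 'b::ring_1 \<Rightarrow> 'b) \<Rightarrow> nat \<Rightarrow> 'b \<Rightarrow> bool" where
  "algebraic_deg_le s D x \<longleftrightarrow> (\<exists>q. q \<noteq> 0 \<and> degree q \<le> D \<and> alg_eval s q x = 0)"

end

theory Submission
  imports Defs
begin

lemma ka_vs: "k_algebra s \<Longrightarrow> vector_space s"
  by (simp add: k_algebra_def)

lemma ka_mult:
  assumes "k_algebra s"
  shows "s c u * s e v = s (c*e) (u*v)"
proof -
  interpret V: vector_space s using ka_vs[OF assms] .
  have h: "\<And>c x y. s c (x * y) = s c x * y \<and> s c (x * y) = x * s c y"
    using assms unfolding k_algebra_def by blast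
  have "s c u * s e v = s c (u * s e v)" using h by metis
  also have "u * s e v = s e (u * v)" using h by metis
  finally show ?thesis by simp
qed

definition W :: "nat \<Rightarrow> nat \<Rightarrow> nat list set" where
  "W m n = {w. set w \<subseteq> {..<m} \<and> length w = n}"

lemma finite_W: "finite (W m n)"
  unfolding W_def by (rule finite_lists_length_eq) simp

lemma W_Suc: "W m (Suc n) = (\<lambda>(j,w). j#w) ` ({..<m} \<times> W m n)"
  unfolding W_def by (auto simp: length_Suc_conv)

lemma expand:
  assumes "k_algebra s"
  shows "(\<Sum>j<m. s (c j) (a j)) ^ n = (\<Sum>w\<in>W m n. s (prod_list (map c w)) (prod_list (map a w)))"
proof (induction n)
  case 0
  interpret V: vector_space s using ka_vs[OF assms] .
  have "W m 0 = {[]}" unfolding W_def by auto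
  then show ?case by simp
next
  case (Suc n)
  interpret V: vector_space s using ka_vs[OF assms] .
  have inj: "inj_on (\<lambda>(j,w). j#w) ({..<m} \<times> W m n)" by (auto simp: inj_on_def)
  have "(\<Sum>j<m. s (c j) (a j)) ^ Suc n = (\<Sum>j<m. s (c j) (a j)) * (\<Sum>j<m. s (c j) (a j)) ^ n"
    by simp
  also have "\<dots> = (\<Sum>j<m. \<Sum>w\<in>W m n. s (c j) (a j) * s (prod_list (map c w)) (prod_list (map a w)))"
    unfolding Suc sum_distrib_right sum_distrib_left by (rule sum.swap)
  also have "\<dots> = (\<Sum>(j,w)\<in>{..<m} \<times> W m n. s (prod_list (map c (j#w))) (prod_list (map a (j#w))))"
    by (simp add: sum.cartesian_product ka_mult[OF assms])
  also have "\<dots> = (\<Sum>w\<in>W m (Suc n). s (prod_list (map c w)) (prod_list (map a w)))"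
    unfolding W_Suc by (subst sum.reindex[OF inj]) (simp add: case_prod_beta')
  finally show ?case .
qed

lemma length_count:
  fixes w :: "nat list"
  assumes "set w \<subseteq> {..<m}"
  shows "length w = (\<Sum>j<m. count_list w j)"
  using assms
proof (induction w)
  case Nil then show ?case by simp
next
  case (Cons x w)
  have xm: "x < m" using Cons.prems by auto
  have "(\<Sum>j<m. count_list (x#w) j) = (\<Sum>j<m. count_list w j + (if j = x then 1 else 0))"
    by (rule sum.cong) auto
  also have "\<dots> = (\<Sum>j<m. count_list w j) + (\<Sum>j<m. if j = x then 1 else 0)"
    by (rule sum.distrib)
  also have "(\<Sum>j<m. if j = x then (1::nat) else 0) = 1"
    using xm by (subst sum.delta) auto
  finally show ?case using Cons by simp
qed

lemma prod_count:
  fixes c :: "nat \<Rightarrow> 'a::comm_monoid_mult"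
  assumes "set w \<subseteq> A" "finite A"
  shows "prod_list (map c w) = (\<Prod>j\<in>A. c j ^ count_list w j)"
  using assms(1)
proof (induction w)
  case Nil then show ?case by simp
next
  case (Cons x w)
  have xA: "x \<in> A" using Cons by auto
  have "(\<Prod>j\<in>A. c j ^ count_list (x#w) j) = (\<Prod>j\<in>A. (if j = x then c j else 1) * c j ^ count_list w j)"
    by (rule prod.cong) auto
  also have "\<dots> = (\<Prod>j\<in>A. (if j = x then c j else 1)) * (\<Prod>j\<in>A. c j ^ count_list w j)"
    by (rule prod.distrib)
  also have "(\<Prod>j\<in>A. (if j = x then c j else 1)) = c x"
    using xA assms(2) by (simp add: prod.delta')
  finally show ?case using Cons by simp
qed

lemma pow_in_Pn:
  assumes "k_algebra s"
  shows "(\<Sum>j<m. s (c j) (a j)) ^ n \<in> Pn s m a n"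
proof -
  interpret V: vector_space s using ka_vs[OF assms] .
  define \<kappa> where "\<kappa> w = (\<lambda>j. if j<m then count_list w j else 0)" for w :: "nat list"
  define f where "f w = s (prod_list (map c w)) (prod_list (map a w))" for w
  have eq: "(\<Sum>j<m. s (c j) (a j)) ^ n = (\<Sum>i\<in>\<kappa>`W m n. \<Sum>w\<in>{w\<in>W m n. \<kappa> w = i}. f w)"
    unfolding expand[OF assms] f_def
    by (rule sum.group[symmetric]) (auto simp: finite_W)
  have mon: "{w\<in>W m n. \<kappa> w = i} = monomials m i" if iin: "i \<in> \<kappa>`W m n" for i
  proof -
    obtain w0 where w0: "w0 \<in> W m n" "i = \<kappa> w0" using iin by blast
    have len0: "n = (\<Sum>j<m. count_list w0 j)" using w0 length_count unfolding W_def by auto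
    show ?thesis
    proof (intro set_eqI iffI)
      fix w assume "w \<in> {w\<in>W m n. \<kappa> w = i}"
      then have sw: "set w \<subseteq> {..<m}" and kw: "\<kappa> w = \<kappa> w0" unfolding W_def w0 by auto
      have "\<forall>j<m. count_list w j = i j"
      proof (intro allI impI)
        fix j assume "j < m"
        with fun_cong[OF kw, of j] show "count_list w j = i j" by (simp add: \<kappa>_def w0)
      qed
      then show "w \<in> monomials m i" using sw unfolding monomials_def by simp
    next
      fix w assume w: "w \<in> monomials m i"
      then have sw: "set w \<subseteq> {..<m}" and cw: "\<forall>j<m. count_list w j = count_list w0 j"
        unfolding monomials_def w0 \<kappa>_def by auto
      have "length w = n" using length_count[OF sw] len0 cw by simp
      moreover have "\<kappa> w = i" unfolding w0 \<kappa>_def using cw by auto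
      ultimately show "w \<in> {w\<in>W m n. \<kappa> w = i}" using sw unfolding W_def by auto
    qed
  qed
  have trm: "(\<Sum>w\<in>{w\<in>W m n. \<kappa> w = i}. f w) \<in> Pn s m a n" if iin: "i \<in> \<kappa>`W m n" for i
  proof -
    obtain w0 where w0: "w0 \<in> W m n" "i = \<kappa> w0" using iin by blast
    have sumi: "(\<Sum>j<m. i j) = n" using w0 length_count[of w0 m] unfolding W_def \<kappa>_def by auto
    have "(\<Sum>w\<in>{w\<in>W m n. \<kappa> w = i}. f w) = (\<Sum>w\<in>monomials m i. s (\<Prod>j<m. c j ^ i j) (prod_list (map a w)))"
      unfolding mon[OF iin] f_def
    proof (rule sum.cong[OF refl])
      fix w assume "w \<in> monomials m i"
      then have "set w \<subseteq> {..<m}" "\<forall>j<m. count_list w j = i j" unfolding monomials_def by auto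
      then show "s (prod_list (map c w)) (prod_list (map a w)) = s (\<Prod>j<m. c j ^ i j) (prod_list (map a w))"
        using prod_count[of w "{..<m}" c] by simp
    qed
    also have "\<dots> = s (\<Prod>j<m. c j ^ i j) (pev m a i)"
      unfolding pev_def V.scale_sum_right ..
    finally have feq: "(\<Sum>w\<in>{w\<in>W m n. \<kappa> w = i}. f w) = s (\<Prod>j<m. c j ^ i j) (pev m a i)" .
    have "pev m a i \<in> {pev m a i | i. (\<Sum>j<m. i j) = n}" using sumi by blast
    then show ?thesis unfolding feq Pn_def by (intro V.span_scale V.span_base)
  qed
  show ?thesis unfolding eq Pn_def
    by (rule V.span_sum) (rule trm[unfolded Pn_def])
qed


lemma span_repr:
  fixes a :: "nat \<Rightarrow> 'b::ring_1" and m :: nat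
  assumes "k_algebra s" "x \<in> module.span s (a ` {..<m})"
  shows "\<exists>c. x = (\<Sum>j<m. s (c j) (a j))"
proof -
  interpret V: vector_space s using ka_vs[OF assms(1)] .
  show ?thesis using assms(2)
  proof (induction rule: V.span_induct_alt)
    case base
    show ?case by (intro exI[of _ "\<lambda>_. 0"]) simp
  next
    case (step e v y)
    then obtain j0 where j0: "j0 < m" "v = a j0" by auto
    from step obtain c where c: "y = (\<Sum>j<m. s (c j) (a j))" by auto
    have "s e v + y = (\<Sum>j<m. s ((c(j0 := c j0 + e)) j) (a j))"
    proof -
      have "(\<Sum>j<m. s ((c(j0 := c j0 + e)) j) (a j)) = (\<Sum>j<m. s (c j) (a j) + (if j = j0 then s e (a j) else 0))"
        by (rule sum.cong) (auto simp: V.scale_left_distrib)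
      also have "\<dots> = y + s e v"
        unfolding sum.distrib c using j0 by (subst sum.delta) auto
      finally show ?thesis by (simp add: add.commute)
    qed
    then show ?case by blast
  qed
qed

lemma card_L: "card {l::nat list. length l = m \<and> sum_list l \<le> r} = (r + m) choose m"
proof -
  have fin: "finite {l::nat list. length l = m \<and> sum_list l \<le> r}"
    by (rule finite_subset[OF _ finite_lists_length_eq[of "{..r}" m]])
       (auto dest: member_le_sum_list)
  have eq: "{l::nat list. length l = m \<and> sum_list l \<le> r} = (\<Union>n\<in>{..r}. {l. length l = m \<and> sum_list l = n})"
    by auto
  have "card {l::nat list. length l = m \<and> sum_list l \<le> r} = (\<Sum>n\<le>r. card {l::nat list. length l = m \<and> sum_list l = n})"
    unfolding eq by (rule card_UN_disjoint) (auto intro: finite_subset[OF _ fin])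
  also have "\<dots> = (\<Sum>n\<le>r. (n + m - 1) choose n)"
    using card_length_sum_list by simp
  also have "\<dots> = (r + m) choose m"
  proof (cases m)
    case 0
    have "(\<Sum>n\<le>r. (n + m - 1) choose n) = (\<Sum>n\<le>r. if n = 0 then 1 else 0)"
      using 0 by (intro sum.cong) auto
    also have "\<dots> = 1" by (subst sum.delta) auto
    finally show ?thesis using 0 by simp
  next
    case (Suc k)
    have "(\<Sum>n\<le>r. (n + m - 1) choose n) = (\<Sum>n\<le>r. (k + n) choose n)"
      using Suc by (intro sum.cong) (auto simp: add.commute)
    also have "\<dots> = Suc (k + r) choose r" by (rule sum_choose_lower)
    also have "\<dots> = Suc (k + r) choose Suc k"
      by (subst binomial_symmetric) auto
    finally show ?thesis using Suc by (simp add: add.commute)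
  qed
  finally show ?thesis .
qed

lemma alg_eval_le:
  assumes "vector_space s" "degree q \<le> N"
  shows "alg_eval s q x = (\<Sum>t\<le>N. s (coeff q t) (x ^ t))"
proof -
  interpret V: vector_space s using assms(1) .
  show ?thesis unfolding alg_eval_def
    by (rule sum.mono_neutral_left) (use assms(2) in \<open>auto simp: coeff_eq_0\<close>)
qed


lemma alg_from_span:
  fixes s :: "'a::field \<Rightarrow> 'b::ring_1 \<Rightarrow> 'b"
  assumes vs: "vector_space s" and fH: "finite H" and cH: "card H \<le> N"
    and sp: "\<forall>n\<le>N. x ^ n \<in> module.span s H"
  shows "algebraic_deg_le s N x"
proof -
  interpret V: vector_space s using vs .
  show ?thesis
  proof (cases "inj_on (\<lambda>n. x ^ n) {..N}")
    case False
    then obtain i j where ij: "i \<le> N" "j \<le> N" "i \<noteq> j" "x ^ i = x ^ j"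
      unfolding inj_on_def by auto
    define q :: "'a poly" where "q = monom 1 i - monom 1 j"
    have cq: "coeff q t = (if t = i then 1 else 0) - (if t = j then 1 else 0)" for t
      unfolding q_def by (simp add: coeff_monom)
    have "q \<noteq> 0" using cq[of i] ij(3) by auto
    moreover have dq: "degree q \<le> N" using ij by (intro degree_le) (auto simp: cq)
    moreover have "alg_eval s q x = 0"
    proof -
      have "alg_eval s q x = (\<Sum>t\<le>N. s (coeff q t) (x ^ t))" by (rule alg_eval_le[OF vs dq])
      also have "\<dots> = (\<Sum>t\<le>N. (if t = i then x ^ t else 0) - (if t = j then x ^ t else 0))"
        unfolding cq by (intro sum.cong) (auto simp: V.scale_left_diff_distrib)
      also have "\<dots> = x ^ i - x ^ j"
        unfolding sum_subtractf using ij by (simp add: sum.delta)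
      finally show ?thesis using ij by simp
    qed
    ultimately show ?thesis unfolding algebraic_deg_le_def by blast
  next
    case True
    define T where "T = (\<lambda>n. x ^ n) ` {..N}"
    have cT: "card T = Suc N" unfolding T_def using True by (simp add: card_image)
    have TH: "T \<subseteq> V.span H" unfolding T_def using sp by auto
    have "V.dependent T"
    proof (rule ccontr)
      assume "\<not> V.dependent T"
      then have "V.independent T" by simp
      from V.independent_span_bound[OF fH this TH] cT cH show False by simp
    qed
    then obtain t u where tu: "finite t" "t \<subseteq> T" "(\<Sum>v\<in>t. s (u v) v) = 0" "\<exists>v\<in>t. u v \<noteq> 0"
      unfolding V.dependent_explicit by blast
    define cc where "cc n = (if x ^ n \<in> t then u (x ^ n) else 0)" for n
    define q :: "'a poly" where "q = (\<Sum>n\<le>N. monom (cc n) n)"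
    have cq: "coeff q k = (if k \<le> N then cc k else 0)" for k
      unfolding q_def by (simp add: coeff_sum coeff_monom)
    from tu(4) obtain v where v: "v \<in> t" "u v \<noteq> 0" by blast
    then obtain n0 where n0: "n0 \<le> N" "v = x ^ n0" using tu(2) unfolding T_def by auto
    have "coeff q n0 \<noteq> 0" using n0 v by (simp add: cq cc_def)
    then have "q \<noteq> 0" by auto
    moreover have dq: "degree q \<le> N" by (intro degree_le) (auto simp: cq)
    moreover have "alg_eval s q x = 0"
    proof -
      have "alg_eval s q x = (\<Sum>n\<le>N. s (coeff q n) (x ^ n))" by (rule alg_eval_le[OF vs dq])
      also have "\<dots> = (\<Sum>n\<in>{n\<in>{..N}. x ^ n \<in> t}. s (u (x ^ n)) (x ^ n))"
        by (subst sum.inter_filter) (auto simp: cq cc_def intro!: sum.cong)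
      also have "\<dots> = (\<Sum>v\<in>t. s (u v) v)"
      proof -
        have tim: "t = (\<lambda>n. x ^ n) ` {n\<in>{..N}. x ^ n \<in> t}"
          using tu(2) unfolding T_def by auto
        have inj2: "inj_on (\<lambda>n. x ^ n) {n\<in>{..N}. x ^ n \<in> t}"
          using True by (rule inj_on_subset) auto
        have "(\<Sum>v\<in>(\<lambda>n. x ^ n) ` {n\<in>{..N}. x ^ n \<in> t}. s (u v) v) = (\<Sum>n\<in>{n\<in>{..N}. x ^ n \<in> t}. s (u (x ^ n)) (x ^ n))"
          by (rule sum.reindex[OF inj2, unfolded comp_def])
        then show ?thesis unfolding tim[symmetric] by simp
      qed
      also have "\<dots> = 0" by (rule tu(3))
      finally show ?thesis .
    qed
    ultimately show ?thesis unfolding algebraic_deg_le_def by blast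
  qed
qed


theorem lemma3p5:
  fixes s :: "'a::field \<Rightarrow> 'b::ring_1 \<Rightarrow> 'b"
    and a :: "nat \<Rightarrow> 'b" and m d :: nat
  assumes "k_algebra s"
    and "d \<ge> 1"
    and "Ple s m a ((d + m - 1) choose m) \<subseteq> Ple s m a (d - 1)"
  shows "\<forall>x\<in>module.span s (a ` {..<m}). algebraic_deg_le s ((d + m - 1) choose m) x"
proof
  interpret V: vector_space s using ka_vs[OF assms(1)] .
  let ?M = "(d + m - 1) choose m"
  define L where "L = {l::nat list. length l = m \<and> sum_list l \<le> d - 1}"
  define H where "H = (\<lambda>l. pev m a (\<lambda>j. l ! j)) ` L"
  have finL: "finite L" unfolding L_def
    by (rule finite_subset[OF _ finite_lists_length_eq[of "{..d-1}" m]])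
       (auto dest: member_le_sum_list)
  have fH: "finite H" unfolding H_def using finL by simp
  have "card L = ?M" unfolding L_def card_L using assms(2) by (simp add: add.commute)
  then have cH: "card H \<le> ?M" unfolding H_def using card_image_le[OF finL] by simp
  have GH: "pev m a i \<in> H" if "(\<Sum>j<m. i j) \<le> d - 1" for i
  proof -
    define l where "l = map i [0..<m]"
    have "sum_list l = (\<Sum>j<m. i j)" unfolding l_def
      by (simp add: sum_list_sum_nth atLeast0LessThan)
    then have "l \<in> L" using that unfolding L_def l_def by simp
    moreover have "pev m a i = pev m a (\<lambda>j. l ! j)"
      unfolding pev_def monomials_def l_def by simp
    ultimately show ?thesis unfolding H_def by blast
  qed
  have PleH: "Ple s m a (d - 1) \<subseteq> V.span H"
    unfolding Ple_def
  proof (rule V.span_minimal[OF _ V.subspace_span])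
    show "(\<Union>n\<in>{0..d - 1}. Pn s m a n) \<subseteq> V.span H"
    proof
      fix y assume "y \<in> (\<Union>n\<in>{0..d - 1}. Pn s m a n)"
      then obtain n where n: "n \<le> d - 1" "y \<in> Pn s m a n" by auto
      have "{pev m a i |i. (\<Sum>j<m. i j) = n} \<subseteq> H" using GH n(1) by auto
      then show "y \<in> V.span H" using n(2) V.span_mono unfolding Pn_def by blast
    qed
  qed
  fix x assume "x \<in> module.span s (a ` {..<m})"
  then obtain c where xc: "x = (\<Sum>j<m. s (c j) (a j))" using span_repr[OF assms(1)] by blast
  have "\<forall>n\<le>?M. x ^ n \<in> V.span H"
  proof (intro allI impI)
    fix n assume "n \<le> ?M"
    have "x ^ n \<in> Pn s m a n" unfolding xc by (rule pow_in_Pn[OF assms(1)])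
    then have "x ^ n \<in> Ple s m a ?M" unfolding Ple_def using \<open>n \<le> ?M\<close>
      by (intro V.span_base) auto
    then show "x ^ n \<in> V.span H" using assms(3) PleH by blast
  qed
  then show "algebraic_deg_le s ?M x"
    by (rule alg_from_span[OF ka_vs[OF assms(1)] fH cH])
qed

end
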